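(* Let $\delta\in(0,1]$, $p\in[0,1]$ and $n\in\mathbb{N}$ with $p\ge\frac{16\ln(2/\delta)}{n}$, and let $$\varepsilon=\log\left(1+\frac{\sqrt{64\log(4/\delta)}}{\sqrt{pn}}+\frac{8}{pn}\right).$$ Let $C\sim\mathrm{Bin}(n-1,p)$ and, conditionally on $C$, $A\sim\mathrm{Bin}(C,1/2)$. Let $P=(A+1,C-A)$ and $Q=(A,C-A+1)$. Then $$\Pr_{z\sim P}\left(-\varepsilon\le\ln\frac{\Pr(P=z)}{\Pr(Q=z)}\le\varepsilon\right)\ge1-\delta\quad\text{and}\quad\Pr_{z\sim Q}\left(-\varepsilon\le\ln\frac{\Pr(P=z)}{\Pr(Q=z)}\le\varepsilon\right)\ge1-\delta.$$ In particular, $P$ and $Q$ are $(\varepsilon,\delta)$-indistinguishable.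
   Context: Two random variables $P,Q$ on the same space are $(\varepsilon,\delta)$-indistinguishable if for every event $E$, $e^{-\varepsilon}(\Pr(Q\in E)-\delta)\le\Pr(P\in E)\le e^{\varepsilon}\Pr(Q\in E)+\delta$. $\mathrm{Bin}(m,p)$ is the binomial distribution. *)

theory Defs
  imports "HOL-Probability.Probability"
begin

definition indist :: "real \<Rightarrow> real \<Rightarrow> 'a pmf \<Rightarrow> 'a pmf \<Rightarrow> bool" where
  "indist \<epsilon> \<delta> P Q \<longleftrightarrow> (\<forall>E.
      exp (-\<epsilon>) * (measure_pmf.prob Q E - \<delta>) \<le> measure_pmf.prob P E \<and>
      measure_pmf.prob P E \<le> exp \<epsilon> * measure_pmf.prob Q E + \<delta>)"

definition loss_bounded :: "real \<Rightarrow> 'a pmf \<Rightarrow> 'a pmf \<Rightarrow> 'a set" where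
  "loss_bounded \<epsilon> P Q = {z. pmf P z > 0 \<and> pmf Q z > 0 \<and>
      - \<epsilon> \<le> ln (pmf P z / pmf Q z) \<and> ln (pmf P z / pmf Q z) \<le> \<epsilon>}"

definition AC_pmf :: "nat \<Rightarrow> real \<Rightarrow> (nat \<times> nat) pmf" where
  "AC_pmf n p = binomial_pmf (n - 1) p \<bind> (\<lambda>c. map_pmf (\<lambda>a. (a, c)) (binomial_pmf c (1/2)))"

definition P_pmf :: "nat \<Rightarrow> real \<Rightarrow> (nat \<times> nat) pmf" where
  "P_pmf n p = map_pmf (\<lambda>(a, c). (a + 1, c - a)) (AC_pmf n p)"

definition Q_pmf :: "nat \<Rightarrow> real \<Rightarrow> (nat \<times> nat) pmf" where
  "Q_pmf n p = map_pmf (\<lambda>(a, c). (a, c - a + 1)) (AC_pmf n p)"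

end

theory Submission
  imports Defs
begin


lemma P_alt: "P_pmf n p = binomial_pmf (n-1) p \<bind> (\<lambda>c. map_pmf (\<lambda>a. (a+1, c-a)) (binomial_pmf c (1/2)))"
  by (simp add: P_pmf_def AC_pmf_def map_bind_pmf pmf.map_comp o_def)

lemma Q_alt: "Q_pmf n p = binomial_pmf (n-1) p \<bind> (\<lambda>c. map_pmf (\<lambda>a. (a, c-a+1)) (binomial_pmf c (1/2)))"
  by (simp add: Q_pmf_def AC_pmf_def map_bind_pmf pmf.map_comp o_def)

lemma pmf_P:
  assumes "x \<ge> 1" "y \<ge> 1"
  shows "pmf (P_pmf n p) (x,y) = pmf (binomial_pmf (n-1) p) (x+y-1) * pmf (binomial_pmf (x+y-1) (1/2)) (x-1)"
proof -
  have pre: "(\<lambda>a. (a+1, c-a)) -` {(x,y)} = (if c = x+y-1 then {x-1} else {})" for c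
    using assms by auto
  have pm: "pmf (map_pmf (\<lambda>a. (a+1, c-a)) (binomial_pmf c (1/2))) (x,y) = 
     (if c = x+y-1 then pmf (binomial_pmf c (1/2)) (x-1) else 0)" for c
    by (subst pmf_map, subst pre) (simp add: measure_pmf_single)
  have "pmf (P_pmf n p) (x,y) = (\<integral>c. pmf (map_pmf (\<lambda>a. (a+1, c-a)) (binomial_pmf c (1/2))) (x,y) \<partial>binomial_pmf (n-1) p)"
    unfolding P_alt pmf_bind ..
  also have "\<dots> = (\<Sum>c\<in>{x+y-1}. pmf (map_pmf (\<lambda>a. (a+1, c-a)) (binomial_pmf c (1/2))) (x,y) * pmf (binomial_pmf (n-1) p) c)"
    by (rule integral_measure_pmf_real) (auto simp only: pm split: if_splits)
  also have "\<dots> = pmf (binomial_pmf (n-1) p) (x+y-1) * pmf (binomial_pmf (x+y-1) (1/2)) (x-1)"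
    by (simp only: pm) simp
  finally show ?thesis .
qed

lemma pmf_Q:
  assumes "x \<ge> 1" "y \<ge> 1"
  shows "pmf (Q_pmf n p) (x,y) = pmf (binomial_pmf (n-1) p) (x+y-1) * pmf (binomial_pmf (x+y-1) (1/2)) x"
proof -
  have pre: "(\<lambda>a. (a, c-a+1)) -` {(x,y)} = (if c - x + 1 = y then {x} else {})" for c
    using assms by auto
  have pm: "pmf (map_pmf (\<lambda>a. (a, c-a+1)) (binomial_pmf c (1/2))) (x,y) = 
     (if c - x + 1 = y then pmf (binomial_pmf c (1/2)) x else 0)" for c
    by (subst pmf_map, subst pre) (simp add: measure_pmf_single)
  have "pmf (Q_pmf n p) (x,y) = (\<integral>c. pmf (map_pmf (\<lambda>a. (a, c-a+1)) (binomial_pmf c (1/2))) (x,y) \<partial>binomial_pmf (n-1) p)"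
    unfolding Q_alt pmf_bind ..
  also have "\<dots> = (\<Sum>c\<in>{x+y-1}. pmf (map_pmf (\<lambda>a. (a, c-a+1)) (binomial_pmf c (1/2))) (x,y) * pmf (binomial_pmf (n-1) p) c)"
  proof (rule integral_measure_pmf_real)
    fix c assume "pmf (map_pmf (\<lambda>a. (a, c-a+1)) (binomial_pmf c (1/2))) (x,y) \<noteq> 0"
    hence "c - x + 1 = y" "pmf (binomial_pmf c (1/2)) x \<noteq> 0"
      by (simp_all only: pm split: if_splits) auto
    hence "x \<le> c" "c - x + 1 = y" by (auto simp: binomial_eq_0)
    thus "c \<in> {x+y-1}" by auto
  qed auto
  also have "\<dots> = pmf (binomial_pmf (n-1) p) (x+y-1) * pmf (binomial_pmf (x+y-1) (1/2)) x"
    using assms by (simp only: pm) simp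
  finally show ?thesis .
qed

lemma pmf_half: "k \<le> c \<Longrightarrow> pmf (binomial_pmf c (1/2)) k = real (c choose k) * (1/2)^c"
  by (simp flip: power_add)

lemma binom_half_ratio:
  assumes "x \<ge> 1" "y \<ge> 1"
  shows "pmf (binomial_pmf (x+y-1) (1/2)) (x-1) * real y = pmf (binomial_pmf (x+y-1) (1/2)) x * real x"
proof -
  obtain a where a: "x = Suc a" using assms by (cases x) auto
  define c where "c = x + y - 1"
  have "(c choose a) * (c - a) = (c choose Suc a) * Suc a"
    using binomial_absorb_comp[of c a] binomial_absorption[of a c] by (simp add: mult.commute)
  moreover have "c - a = y" using a assms c_def by auto
  ultimately have e: "real (c choose a) * real y = real (c choose Suc a) * real (Suc a)"
    by (metis of_nat_mult)
  have "a \<le> c" "Suc a \<le> c" using a assms c_def by auto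
  hence "pmf (binomial_pmf c (1/2)) a = real (c choose a) * (1/2)^c"
        "pmf (binomial_pmf c (1/2)) (Suc a) = real (c choose Suc a) * (1/2)^c"
    by (simp_all only: pmf_half)
  hence "pmf (binomial_pmf c (1/2)) a * real y = pmf (binomial_pmf c (1/2)) (Suc a) * real (Suc a)"
  proof (simp only:)
    have "real (c choose a) * (1/2)^c * real y = (real (c choose a) * real y) * (1/2)^c" by (simp add: ac_simps)
    also have "\<dots> = (real (c choose Suc a) * real (Suc a)) * (1/2)^c" by (simp only: e)
    finally show "real (c choose a) * (1/2)^c * real y = real (c choose Suc a) * (1/2)^c * real (Suc a)"
      by (simp add: ac_simps)
  qed
  moreover have "x + y - 1 = c" "x - 1 = a" using c_def a by auto
  ultimately show ?thesis using a by simp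
qed



definition G :: "real \<Rightarrow> (nat \<times> nat) set" where
  "G \<alpha> = {(a,c). real a + 1 \<le> \<alpha> * (real c - real a) \<and> real c - real a + 1 \<le> \<alpha> * real a}"

lemma inner_bound:
  fixes \<alpha> \<gamma> \<rho> :: real and c :: nat
  assumes "\<alpha> \<ge> 1" "\<gamma> = (\<alpha>-1)/(2*(1+\<alpha>))" "\<rho> = 1/(1+\<alpha>)"
  shows "measure_pmf.prob (binomial_pmf c (1/2)) {a. (a,c) \<notin> G \<alpha>} \<le> 2 * exp (4*\<gamma>*\<rho> - 2*\<gamma>^2*real c)"
proof -
  have g0: "\<gamma> \<ge> 0" "\<rho> > 0" using assms by auto
  have sub: "{a. (a,c) \<notin> G \<alpha>} \<subseteq> {a. real a \<ge> real c * (1/2) + (\<gamma>*c - \<rho>)} \<union> {a. real a \<le> real c * (1/2) - (\<gamma>*c - \<rho>)}"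
  proof
    fix a assume "a \<in> {a. (a,c) \<notin> G \<alpha>}"
    hence "\<not> (real a + 1 \<le> \<alpha> * (real c - real a)) \<or> \<not> (real c - real a + 1 \<le> \<alpha> * real a)"
      by (auto simp: G_def)
    moreover have "real c * (1/2) + (\<gamma>*c - \<rho>) = (\<alpha> * c - 1)/(1+\<alpha>)"
      using assms(1) unfolding assms(2,3) by (simp add: field_simps add_nonneg_eq_0_iff)
    moreover have "real c * (1/2) - (\<gamma>*c - \<rho>) = (c + 1)/(1+\<alpha>)"
      using assms(1) unfolding assms(2,3) by (simp add: field_simps add_nonneg_eq_0_iff)
    moreover have pos: "1 + \<alpha> > 0" using assms by auto
    moreover have "\<not> (real a + 1 \<le> \<alpha> * (real c - real a)) \<Longrightarrow> real a \<ge> (\<alpha> * c - 1)/(1+\<alpha>)"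
      using pos by (simp add: pos_divide_le_eq algebra_simps)
    moreover have "\<not> (real c - real a + 1 \<le> \<alpha> * real a) \<Longrightarrow> real a \<le> (c + 1)/(1+\<alpha>)"
      using pos by (simp add: pos_le_divide_eq algebra_simps)
    ultimately show "a \<in> {a. real a \<ge> real c * (1/2) + (\<gamma>*c - \<rho>)} \<union> {a. real a \<le> real c * (1/2) - (\<gamma>*c - \<rho>)}"
      by auto
  qed
  show ?thesis
  proof (cases "c > 0 \<and> \<gamma>*c - \<rho> \<ge> 0")
    case True
    interpret binomial_distribution c "1/2" by unfold_locales auto
    have e: "-2 * (\<gamma>*c - \<rho>)^2 / real c \<le> 4*\<gamma>*\<rho> - 2*\<gamma>^2*real c"
    proof -
      have "(\<gamma>*c - \<rho>)^2 / real c = \<gamma>^2 * c - 2*\<gamma>*\<rho> + \<rho>^2/c"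
        using True by (simp add: field_simps power2_eq_square)
      moreover have "\<rho>^2/c \<ge> 0" by simp
      moreover have "-2 * (\<gamma>*c - \<rho>)^2 / real c = -2 * ((\<gamma>*c - \<rho>)^2 / real c)" by simp
      ultimately show ?thesis by linarith
    qed
    have "measure_pmf.prob (binomial_pmf c (1/2)) {a. (a,c) \<notin> G \<alpha>} \<le>
      measure_pmf.prob (binomial_pmf c (1/2)) ({a. real a \<ge> real c * (1/2) + (\<gamma>*c - \<rho>)} \<union> {a. real a \<le> real c * (1/2) - (\<gamma>*c - \<rho>)})"
      by (rule measure_pmf.finite_measure_mono[OF sub]) auto
    also have "\<dots> \<le> measure_pmf.prob (binomial_pmf c (1/2)) {a. real a \<ge> real c * (1/2) + (\<gamma>*c - \<rho>)}
       + measure_pmf.prob (binomial_pmf c (1/2)) {a. real a \<le> real c * (1/2) - (\<gamma>*c - \<rho>)}"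
      by (rule measure_subadditive) (auto simp: measure_pmf.emeasure_eq_measure)
    also have "\<dots> \<le> exp (-2 * (\<gamma>*c - \<rho>)^2 / real c) + exp (-2 * (\<gamma>*c - \<rho>)^2 / real c)"
      using True by (intro add_mono prob_ge prob_le) auto
    also have "\<dots> \<le> 2 * exp (4*\<gamma>*\<rho> - 2*\<gamma>^2*real c)"
      using e by simp
    finally show ?thesis .
  next
    case False
    have nn: "4*\<gamma>*\<rho> - 2*\<gamma>^2*real c \<ge> 0"
    proof (cases "c = 0")
      case False': False
      with False have "\<gamma>*c < \<rho>" by auto
      hence "\<gamma> * (\<gamma>*c) \<le> \<gamma> * \<rho>" using g0 by (intro mult_left_mono) auto
      moreover have "\<gamma> * \<rho> \<ge> 0" using g0 by simp
      ultimately show ?thesis by (simp add: power2_eq_square algebra_simps)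
    qed (use g0 in simp)
    hence "1 \<le> 2 * exp (4*\<gamma>*\<rho> - 2*\<gamma>^2*real c)"
    proof -
      have "1 \<le> exp (4*\<gamma>*\<rho> - 2*\<gamma>^2*real c)" using nn by simp
      thus ?thesis by linarith
    qed
    thus ?thesis using measure_pmf.prob_le_1 order_trans by blast
  qed
qed



lemma mgf_binomial:
  fixes l p :: real
  assumes "p \<in> {0..1}"
  shows "measure_pmf.expectation (binomial_pmf m p) (\<lambda>c. exp (-l * real c)) = (1 - p + p*exp(-l))^m"
proof -
  have "measure_pmf.expectation (binomial_pmf m p) (\<lambda>c. exp (-l * real c)) =
     (\<Sum>k\<le>m. real (m choose k) * (p*exp(-l)) ^ k * (1 - p) ^ (m - k))"
    unfolding expectation_binomial_pmf'[OF assms]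
  proof (intro sum.cong refl)
    fix k
    have "exp (-l * real k) = exp (-l) ^ k" using exp_of_nat_mult[of k "-l"] by (simp add: mult.commute)
    thus "(real (m choose k) * p ^ k * (1 - p) ^ (m - k)) *\<^sub>R exp (- l * real k) =
         real (m choose k) * (p * exp (- l)) ^ k * (1 - p) ^ (m - k)"
      by (simp add: power_mult_distrib)
  qed
  also have "\<dots> = (p*exp(-l) + (1-p))^m" by (rule binomial_ring[symmetric])
  finally show ?thesis by (simp add: algebra_simps)
qed



lemma AC_bad:
  fixes \<alpha> \<gamma> \<rho> p :: real
  assumes p: "p \<in> {0..1}" and "\<alpha> \<ge> 1" "\<gamma> = (\<alpha>-1)/(2*(1+\<alpha>))" "\<rho> = 1/(1+\<alpha>)"
  shows "measure_pmf.prob (AC_pmf n p) (- G \<alpha>) \<le> 2*exp(4*\<gamma>*\<rho>) * (1 - p + p*exp(-(2*\<gamma>^2)))^(n-1)"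
proof -
  define B where "B = binomial_pmf (n-1) p"
  define h where "h = (\<lambda>c::nat. 2 * exp (4*\<gamma>*\<rho> - 2*\<gamma>^2*real c))"
  have hint: "integrable B h" unfolding B_def using p by auto
  have "emeasure (AC_pmf n p) (- G \<alpha>) = (\<integral>\<^sup>+c. emeasure (map_pmf (\<lambda>a. (a, c)) (binomial_pmf c (1/2))) (- G \<alpha>) \<partial>B)"
    unfolding AC_pmf_def B_def by simp
  also have "\<dots> \<le> (\<integral>\<^sup>+c. ennreal (h c) \<partial>B)"
  proof (intro nn_integral_mono)
    fix c
    have "emeasure (map_pmf (\<lambda>a. (a, c)) (binomial_pmf c (1/2))) (- G \<alpha>) =
          ennreal (measure_pmf.prob (binomial_pmf c (1/2)) {a. (a,c) \<notin> G \<alpha>})"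
      by (simp add: measure_pmf.emeasure_eq_measure vimage_def)
    also have "\<dots> \<le> ennreal (h c)"
      unfolding h_def by (intro ennreal_leI inner_bound assms)
    finally show "emeasure (map_pmf (\<lambda>a. (a, c)) (binomial_pmf c (1/2))) (- G \<alpha>) \<le> ennreal (h c)" .
  qed
  also have "\<dots> = ennreal (measure_pmf.expectation B h)"
    by (rule nn_integral_eq_integral[OF hint]) (auto simp: h_def)
  also have "measure_pmf.expectation B h = 2*exp(4*\<gamma>*\<rho>) * measure_pmf.expectation B (\<lambda>c. exp (-(2*\<gamma>^2) * real c))"
  proof -
    have "h = (\<lambda>c. 2*exp(4*\<gamma>*\<rho>) * exp (-(2*\<gamma>^2) * real c))"
      unfolding h_def fun_eq_iff by (simp flip: exp_add)
    thus ?thesis by simp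
  qed
  also have "\<dots> = 2*exp(4*\<gamma>*\<rho>) * (1 - p + p*exp(-(2*\<gamma>^2)))^(n-1)"
    unfolding B_def by (subst mgf_binomial[OF p]) simp
  finally have fin: "ennreal (measure_pmf.prob (AC_pmf n p) (- G \<alpha>)) \<le> ennreal (2*exp(4*\<gamma>*\<rho>) * (1 - p + p*exp(-(2*\<gamma>^2)))^(n-1))"
    by (simp add: measure_pmf.emeasure_eq_measure)
  have "1 - p + p*exp(-(2*\<gamma>^2)) \<ge> 0" using p by (simp add: add_nonneg_nonneg)
  hence "0 \<le> 2*exp(4*\<gamma>*\<rho>) * (1 - p + p*exp(-(2*\<gamma>^2)))^(n-1)" by simp
  with fin show ?thesis by (simp add: ennreal_le_iff)
qed



lemma PQ_ratio:
  assumes "x \<ge> 1" "y \<ge> 1"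
  shows "pmf (P_pmf n p) (x,y) * real y = pmf (Q_pmf n p) (x,y) * real x"
  using binom_half_ratio[OF assms] unfolding pmf_P[OF assms] pmf_Q[OF assms]
  by (metis mult.assoc)

lemma in_loss:
  assumes "x \<ge> 1" "y \<ge> 1" "pmf (P_pmf n p) (x,y) > 0 \<or> pmf (Q_pmf n p) (x,y) > 0"
    "real x \<le> \<alpha> * real y" "real y \<le> \<alpha> * real x" "0 < \<alpha>" "\<alpha> \<le> exp \<epsilon>"
  shows "(x,y) \<in> loss_bounded \<epsilon> (P_pmf n p) (Q_pmf n p)"
proof -
  note r = PQ_ratio[OF assms(1,2), of n p]
  have xp: "real x > 0" "real y > 0" using assms by auto
  have pos: "pmf (P_pmf n p) (x,y) > 0" "pmf (Q_pmf n p) (x,y) > 0"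
    using assms(3) r xp by (smt (verit) mult_pos_pos pmf_nonneg zero_less_mult_pos2)+
  have q: "pmf (P_pmf n p) (x,y) / pmf (Q_pmf n p) (x,y) = real x / real y"
    using r pos xp by (simp add: field_simps)
  have "ln (real x / real y) \<le> ln \<alpha>"
    using xp assms by (subst ln_le_cancel_iff) (auto simp: divide_le_eq mult.commute)
  also have "\<dots> \<le> \<epsilon>" using assms(6,7) by (metis ln_exp ln_le_cancel_iff exp_gt_zero)
  finally have u: "ln (real x / real y) \<le> \<epsilon>" .
  have "ln (real y / real x) \<le> ln \<alpha>"
    using xp assms by (subst ln_le_cancel_iff) (auto simp: divide_le_eq mult.commute)
  also have "\<dots> \<le> \<epsilon>" using assms(6,7) by (metis ln_exp ln_le_cancel_iff exp_gt_zero)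
  finally have l: "ln (real y / real x) \<le> \<epsilon>" .
  have "ln (real y / real x) = - ln (real x / real y)"
    using xp by (simp add: ln_div)
  with u l pos q show ?thesis unfolding loss_bounded_def by auto
qed

lemma set_AC: "(a,c) \<in> set_pmf (AC_pmf n p) \<Longrightarrow> a \<le> c"
  unfolding AC_pmf_def by (auto simp: set_pmf_binomial_eq split: if_splits)

lemma P_lower:
  assumes "0 < \<alpha>" "\<alpha> \<le> exp \<epsilon>"
  shows "measure_pmf.prob (P_pmf n p) (loss_bounded \<epsilon> (P_pmf n p) (Q_pmf n p)) \<ge> measure_pmf.prob (AC_pmf n p) (G \<alpha>)"
proof -
  define f where "f = (\<lambda>(a::nat, c::nat). (a + 1, c - a))"
  have Pf: "P_pmf n p = map_pmf f (AC_pmf n p)" unfolding P_pmf_def f_def ..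
  have "measure_pmf.prob (AC_pmf n p) (G \<alpha>) = measure_pmf.prob (AC_pmf n p) (G \<alpha> \<inter> set_pmf (AC_pmf n p))"
    by (simp add: measure_Int_set_pmf)
  also have "\<dots> \<le> measure_pmf.prob (AC_pmf n p) (f -` loss_bounded \<epsilon> (P_pmf n p) (Q_pmf n p))"
  proof (rule measure_pmf.finite_measure_mono)
    show "G \<alpha> \<inter> set_pmf (AC_pmf n p) \<subseteq> f -` loss_bounded \<epsilon> (P_pmf n p) (Q_pmf n p)"
    proof safe
      fix a c assume g: "(a,c) \<in> G \<alpha>" and s: "(a,c) \<in> set_pmf (AC_pmf n p)"
      have ac: "a \<le> c" using set_AC[OF s] .
      have g1: "real a + 1 \<le> \<alpha> * (real c - real a)" and g2: "real c - real a + 1 \<le> \<alpha> * real a"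
        using g by (auto simp: G_def)
      have "real c - real a > 0"
      proof (rule ccontr)
        assume "\<not> ?thesis"
        hence "\<alpha> * (real c - real a) \<le> 0" using assms(1) by (simp add: mult_nonneg_nonpos)
        with g1 show False by simp
      qed
      hence cy: "c - a \<ge> 1" and ry: "real (c - a) = real c - real a" using ac by auto
      have "f (a,c) \<in> set_pmf (P_pmf n p)" using s unfolding Pf by simp
      hence "pmf (P_pmf n p) (a+1, c-a) > 0" unfolding f_def by (simp add: pmf_positive)
      moreover have "real (a+1) \<le> \<alpha> * real (c - a)" using g1 ry by simp
      moreover have "real (c-a) \<le> \<alpha> * real (a+1)" using g2 ry assms(1) by (simp add: algebra_simps)
      ultimately have "(a+1, c-a) \<in> loss_bounded \<epsilon> (P_pmf n p) (Q_pmf n p)"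
        using in_loss[of "a+1" "c-a" n p \<alpha> \<epsilon>] cy assms by auto
      thus "(a,c) \<in> f -` loss_bounded \<epsilon> (P_pmf n p) (Q_pmf n p)" unfolding f_def by simp
    qed
  qed auto
  also have "\<dots> = measure_pmf.prob (P_pmf n p) (loss_bounded \<epsilon> (P_pmf n p) (Q_pmf n p))"
    unfolding Pf by simp
  finally show ?thesis .
qed

lemma Q_lower:
  assumes "0 < \<alpha>" "\<alpha> \<le> exp \<epsilon>"
  shows "measure_pmf.prob (Q_pmf n p) (loss_bounded \<epsilon> (P_pmf n p) (Q_pmf n p)) \<ge> measure_pmf.prob (AC_pmf n p) (G \<alpha>)"
proof -
  define f where "f = (\<lambda>(a::nat, c::nat). (a, c - a + 1))"
  have Qf: "Q_pmf n p = map_pmf f (AC_pmf n p)" unfolding Q_pmf_def f_def ..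
  have "measure_pmf.prob (AC_pmf n p) (G \<alpha>) = measure_pmf.prob (AC_pmf n p) (G \<alpha> \<inter> set_pmf (AC_pmf n p))"
    by (simp add: measure_Int_set_pmf)
  also have "\<dots> \<le> measure_pmf.prob (AC_pmf n p) (f -` loss_bounded \<epsilon> (P_pmf n p) (Q_pmf n p))"
  proof (rule measure_pmf.finite_measure_mono)
    show "G \<alpha> \<inter> set_pmf (AC_pmf n p) \<subseteq> f -` loss_bounded \<epsilon> (P_pmf n p) (Q_pmf n p)"
    proof safe
      fix a c assume g: "(a,c) \<in> G \<alpha>" and s: "(a,c) \<in> set_pmf (AC_pmf n p)"
      have ac: "a \<le> c" using set_AC[OF s] .
      have g1: "real a + 1 \<le> \<alpha> * (real c - real a)" and g2: "real c - real a + 1 \<le> \<alpha> * real a"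
        using g by (auto simp: G_def)
      have "real a > 0"
      proof (rule ccontr)
        assume "\<not> ?thesis"
        hence "real a = 0" by simp
        with g2 ac show False by simp
      qed
      hence ax: "a \<ge> 1" by simp
      have ry: "real (c - a + 1) = real c - real a + 1" using ac by auto
      have "f (a,c) \<in> set_pmf (Q_pmf n p)" using s unfolding Qf by simp
      hence "pmf (Q_pmf n p) (a, c-a+1) > 0" unfolding f_def by (simp add: pmf_positive)
      moreover have "real a \<le> \<alpha> * real (c - a + 1)" using g1 ry assms(1)
        by (smt (verit, ccfv_SIG) mult_left_mono)
      moreover have "real (c-a+1) \<le> \<alpha> * real a" using g2 ry by simp
      ultimately have "(a, c-a+1) \<in> loss_bounded \<epsilon> (P_pmf n p) (Q_pmf n p)"
        using in_loss[of "a" "c-a+1" n p \<alpha> \<epsilon>] ax assms by auto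
      thus "(a,c) \<in> f -` loss_bounded \<epsilon> (P_pmf n p) (Q_pmf n p)" unfolding f_def by simp
    qed
  qed auto
  also have "\<dots> = measure_pmf.prob (Q_pmf n p) (loss_bounded \<epsilon> (P_pmf n p) (Q_pmf n p))"
    unfolding Qf by simp
  finally show ?thesis .
qed



lemma measure_le_scaled:
  fixes M N :: "'a pmf"
  assumes "\<And>z. z \<in> A \<Longrightarrow> pmf M z \<le> c * pmf N z" "c \<ge> 0"
  shows "measure_pmf.prob M A \<le> c * measure_pmf.prob N A"
proof -
  have "emeasure (measure_pmf M) A = (\<integral>\<^sup>+x. ennreal (pmf M x) \<partial>count_space A)"
    by (simp add: nn_integral_pmf)
  also have "\<dots> \<le> (\<integral>\<^sup>+x. ennreal c * ennreal (pmf N x) \<partial>count_space A)"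
    by (intro nn_integral_mono) (use assms in \<open>auto simp flip: ennreal_mult intro: ennreal_leI\<close>)
  also have "\<dots> = ennreal c * emeasure (measure_pmf N) A"
    by (simp add: nn_integral_cmult nn_integral_pmf)
  finally have "ennreal (measure_pmf.prob M A) \<le> ennreal (c * measure_pmf.prob N A)"
    using assms(2) by (simp add: measure_pmf.emeasure_eq_measure ennreal_mult)
  thus ?thesis using assms(2) by (simp add: ennreal_le_iff)
qed

lemma indist_from_loss:
  fixes P Q :: "'a pmf"
  assumes "measure_pmf.prob P (loss_bounded \<epsilon> P Q) \<ge> 1 - \<delta>"
          "measure_pmf.prob Q (loss_bounded \<epsilon> P Q) \<ge> 1 - \<delta>"
  shows "indist \<epsilon> \<delta> P Q"
  unfolding indist_def
proof
  fix E
  define S where "S = loss_bounded \<epsilon> P Q"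
  have PQ: "pmf P z \<le> exp \<epsilon> * pmf Q z" if "z \<in> S" for z
  proof -
    have "pmf P z > 0" "pmf Q z > 0" "ln (pmf P z / pmf Q z) \<le> \<epsilon>" using that by (auto simp: S_def loss_bounded_def)
    hence "pmf P z / pmf Q z \<le> exp \<epsilon>" by (metis exp_ln exp_le_cancel_iff divide_pos_pos)
    thus ?thesis using \<open>pmf Q z > 0\<close> by (simp add: divide_le_eq mult.commute)
  qed
  have QP: "pmf Q z \<le> exp \<epsilon> * pmf P z" if "z \<in> S" for z
  proof -
    have "pmf P z > 0" "pmf Q z > 0" "-\<epsilon> \<le> ln (pmf P z / pmf Q z)" using that by (auto simp: S_def loss_bounded_def)
    moreover have "ln (pmf P z / pmf Q z) = - ln (pmf Q z / pmf P z)"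
      using calculation by (simp add: ln_div)
    ultimately have "ln (pmf Q z / pmf P z) \<le> \<epsilon>" by simp
    hence "pmf Q z / pmf P z \<le> exp \<epsilon>" using \<open>pmf P z > 0\<close> \<open>pmf Q z > 0\<close> by (metis exp_ln exp_le_cancel_iff divide_pos_pos)
    thus ?thesis using \<open>pmf P z > 0\<close> by (simp add: divide_le_eq mult.commute)
  qed
  have split: "measure_pmf.prob M E \<le> measure_pmf.prob M (E \<inter> S) + measure_pmf.prob M (- S)" for M :: "'a pmf"
  proof -
    have "measure_pmf.prob M E \<le> measure_pmf.prob M ((E \<inter> S) \<union> (- S))"
      by (rule measure_pmf.finite_measure_mono) auto
    also have "\<dots> \<le> measure_pmf.prob M (E \<inter> S) + measure_pmf.prob M (- S)"
      by (rule measure_subadditive) (auto simp: measure_pmf.emeasure_eq_measure)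
    finally show ?thesis .
  qed
  have cP: "measure_pmf.prob P (- S) \<le> \<delta>" using assms(1) measure_pmf.prob_compl[of S P] unfolding S_def by (simp add: Compl_eq_Diff_UNIV)
  have cQ: "measure_pmf.prob Q (- S) \<le> \<delta>" using assms(2) measure_pmf.prob_compl[of S Q] unfolding S_def by (simp add: Compl_eq_Diff_UNIV)
  have m1: "measure_pmf.prob P (E \<inter> S) \<le> exp \<epsilon> * measure_pmf.prob Q (E \<inter> S)"
    by (rule measure_le_scaled) (use PQ in auto)
  have m2: "measure_pmf.prob Q (E \<inter> S) \<le> exp \<epsilon> * measure_pmf.prob P (E \<inter> S)"
    by (rule measure_le_scaled) (use QP in auto)
  have mono: "measure_pmf.prob M (E \<inter> S) \<le> measure_pmf.prob M E" for M :: "'a pmf"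
    by (rule measure_pmf.finite_measure_mono) auto
  have a1: "exp \<epsilon> * measure_pmf.prob Q (E \<inter> S) \<le> exp \<epsilon> * measure_pmf.prob Q E"
    by (intro mult_left_mono mono) auto
  have up: "measure_pmf.prob P E \<le> exp \<epsilon> * measure_pmf.prob Q E + \<delta>"
    using split[of P] m1 a1 cP by linarith
  have a2: "exp \<epsilon> * measure_pmf.prob P (E \<inter> S) \<le> exp \<epsilon> * measure_pmf.prob P E"
    by (intro mult_left_mono mono) auto
  have "measure_pmf.prob Q E - \<delta> \<le> exp \<epsilon> * measure_pmf.prob P E"
    using split[of Q] m2 a2 cQ by linarith
  hence "exp (-\<epsilon>) * (measure_pmf.prob Q E - \<delta>) \<le> exp (-\<epsilon>) * (exp \<epsilon> * measure_pmf.prob P E)"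
    by (intro mult_left_mono) auto
  also have "\<dots> = measure_pmf.prob P E" by (simp add: mult.assoc[symmetric] flip: exp_add)
  finally have "exp (-\<epsilon>) * (measure_pmf.prob Q E - \<delta>) \<le> measure_pmf.prob P E" .
  with up show "exp (-\<epsilon>) * (measure_pmf.prob Q E - \<delta>) \<le> measure_pmf.prob P E \<and>
      measure_pmf.prob P E \<le> exp \<epsilon> * measure_pmf.prob Q E + \<delta>" by simp
qed



lemma ln2_ge: "ln (2::real) \<ge> 1/2"
proof -
  have "exp (1/2::real) * exp (1/2) = exp 1" by (simp flip: exp_add)
  hence h: "exp (1/2::real) * exp (1/2) \<le> 3" using exp_le by simp
  have "exp (1/2::real) \<le> 2"
  proof (rule ccontr)
    assume "\<not> ?thesis"
    hence "2 * 2 < exp (1/2::real) * exp (1/2)" by (intro mult_strict_mono) auto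
    with h show False by simp
  qed
  thus ?thesis by (subst ln_ge_iff) auto
qed

lemma tail_numeric:
  fixes \<delta> p :: real and n :: nat
  assumes d: "0 < \<delta>" "\<delta> \<le> 1" and p: "0 \<le> p" "p \<le> 1" and n: "n > 0"
    and hp: "p \<ge> 16 * ln (2 / \<delta>) / real n"
  defines "s \<equiv> p * real n" and "L \<equiv> ln (4 / \<delta>)"
  defines "r \<equiv> sqrt L / sqrt s"
  defines "\<alpha> \<equiv> 1 + 8 * r"
  defines "\<gamma> \<equiv> (\<alpha>-1)/(2*(1+\<alpha>))" and "\<rho> \<equiv> 1/(1+\<alpha>)"
  shows "2*exp(4*\<gamma>*\<rho>) * (1 - p + p*exp(-(2*\<gamma>^2)))^(n-1) \<le> \<delta>"
proof -
  have l2: "ln (2::real) \<ge> 1/2" by (rule ln2_ge)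
  have ln4: "ln (4::real) = 2 * ln 2"
    using ln_mult[of "2::real" 2] by simp
  have Ld: "L = 2 * ln 2 - ln \<delta>" unfolding L_def using d ln4 by (simp add: ln_div)
  have L2: "ln (2/\<delta>) = ln 2 - ln \<delta>" using d by (simp add: ln_div)
  have lnd: "ln \<delta> \<le> 0" using d by simp
  have sge: "s \<ge> 16 * (L - ln 2)"
    using hp n unfolding s_def Ld L2 by (simp add: pos_divide_le_eq)
  have Lge: "L \<ge> 1" using Ld lnd l2 by linarith
  have s8: "s \<ge> 8 * L" using sge Ld lnd by (simp add: algebra_simps)
  have spos: "s > 0" using s8 Lge by linarith
  have r0: "r \<ge> 0" unfolding r_def using Lge spos by simp
  have r2: "r^2 = L / s" unfolding r_def using Lge spos by (simp add: power_divide)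
  have sr: "s * r^2 = L" using r2 spos by simp
  have r28: "r^2 \<le> 1/8" using r2 s8 spos Lge by (simp add: divide_le_eq)
  have rle: "r \<le> 9/25"
  proof (rule ccontr)
    assume "\<not> ?thesis"
    hence "(9/25)^2 < r^2" by (intro power_strict_mono) auto
    moreover have "(9/25::real)^2 = 81/625" by (simp add: power2_eq_square)
    ultimately show False using r28 by linarith
  qed
  define q where "q = 1 + 4*r"
  have q1: "q \<ge> 1" using r0 q_def by simp
  have gq: "\<gamma> = 2*r/q" unfolding \<gamma>_def \<alpha>_def q_def using r0 by (simp add: field_simps)
  have rq: "\<rho> = 1/(2*q)" unfolding \<rho>_def \<alpha>_def q_def using r0 by (simp add: field_simps)
  define lam where "lam = 2*\<gamma>^2"
  have lamq: "lam = 8*r^2/q^2" unfolding lam_def gq by (simp add: power_divide)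
  have K: "4*\<gamma>*\<rho> = 4*r/q^2" unfolding gq rq using q1 by (simp add: power2_eq_square field_simps)
  have lam0: "lam \<ge> 0" unfolding lam_def by simp
  have rr: "r*r \<le> 9/25 * r" using rle r0 by (intro mult_right_mono) auto
  have lam18: "lam \<le> 9/50"
  proof -
    have qq: "q^2 = 1 + 8*r + 16*(r*r)" unfolding q_def by (simp add: power2_eq_square algebra_simps)
    have "8*r^2 \<le> 9/50 * q^2" unfolding qq using rr r0 rle by (simp add: power2_eq_square)
    thus ?thesis unfolding lamq using q1 by (simp add: divide_le_eq)
  qed
  have K4: "4*\<gamma>*\<rho> \<le> 1/4"
  proof -
    have "q^2 - 16*r = (1 - 4*r)^2" unfolding q_def by (simp add: power2_eq_square algebra_simps)
    hence "16 * r \<le> q^2" by (smt (verit) zero_le_power2)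
    thus ?thesis unfolding K using q1 by (simp add: divide_le_eq)
  qed
  have q2: "q^2 \<le> 149/25"
  proof -
    have "q \<le> 61/25" unfolding q_def using rle by simp
    hence "q^2 \<le> (61/25)^2" using q1 by (intro power_mono) auto
    moreover have "(61/25::real)^2 = 3721/625" by (simp add: power2_eq_square)
    ultimately show ?thesis by linarith
  qed
  have slam: "s * lam \<ge> 67/50 * L"
  proof -
    have "s * lam = 8 * L / q^2" unfolding lamq using sr by (simp add: field_simps)
    moreover have "8 * L / q^2 \<ge> 8 * L / (149/25)"
      using q1 q2 Lge by (intro divide_left_mono) auto
    ultimately show ?thesis using Lge by simp
  qed
  define u where "u = 1 - exp (-lam)"
  have u1: "u \<le> 1" "u \<ge> 0" unfolding u_def using lam0 by auto
  have ulam: "u \<ge> 50/59 * lam"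
  proof -
    have "1 + lam \<le> exp lam" by (rule exp_ge_add_one_self)
    hence "exp (-lam) \<le> 1/(1+lam)" using lam0 by (simp add: exp_minus divide_simps)
    hence "u \<ge> lam/(1+lam)" unfolding u_def using lam0 by (simp add: field_simps)
    moreover have "lam/(1+lam) \<ge> lam/(59/50)" using lam0 lam18 by (intro divide_left_mono) auto
    moreover have "lam/(59/50) = 50/59*lam" by simp
    ultimately show ?thesis by (metis order_trans)
  qed
  have base: "1 - p + p*exp(-(2*\<gamma>^2)) = 1 - p*u" unfolding u_def lam_def by (simp add: algebra_simps)
  have b0: "0 \<le> 1 - p*u" using p u1 by (simp add: mult_le_one)
  have b1: "1 - p*u \<le> exp (-(p*u))" using exp_ge_add_one_self[of "-(p*u)"] by simp
  have "(1 - p*u)^(n-1) \<le> exp (-(p*u))^(n-1)" using b0 b1 by (intro power_mono) auto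
  also have "\<dots> = exp (-(p*u*real (n-1)))" using exp_of_nat_mult[of "n-1" "-(p*u)"] by (simp add: mult.commute)
  finally have pw: "(1 - p*u)^(n-1) \<le> exp (-(p*u*real (n-1)))" .
  have pn: "p * real (n-1) \<ge> s - 1" unfolding s_def using n p by (simp add: of_nat_diff algebra_simps)
  have e1: "p*u*real (n-1) \<ge> (s-1)*u"
  proof -
    have "(s-1)*u \<le> (p * real (n-1))*u" using pn u1 by (intro mult_right_mono) auto
    thus ?thesis by (simp add: ac_simps)
  qed
  have s1: "s - 1 \<ge> 0" using s8 Lge by linarith
  have e2: "(s-1)*u \<ge> 50/59*((s-1)*lam)" using mult_left_mono[OF ulam s1] by (simp add: ac_simps)
  have e3: "(s-1)*lam \<ge> 67/50*L - 9/50" using slam lam18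
    by (simp add: algebra_simps)
  define A where "A = p*u*real (n-1)"
  define B where "B = (s-1)*u"
  define C where "C = (s-1)*lam"
  have expo: "4*\<gamma>*\<rho> - A \<le> ln 2 - L"
    using K4 e1 e2 e3 l2 Lge unfolding A_def[symmetric] B_def[symmetric] C_def[symmetric] by linarith
  have "2*exp(4*\<gamma>*\<rho>) * (1 - p + p*exp(-(2*\<gamma>^2)))^(n-1) \<le> 2*exp(4*\<gamma>*\<rho>) * exp (-(p*u*real (n-1)))"
    unfolding base using pw by (intro mult_left_mono) auto
  also have "\<dots> = 2*exp(4*\<gamma>*\<rho> - p*u*real (n-1))" by (simp add: exp_diff exp_minus field_simps)
  also have "\<dots> \<le> 2*exp(ln 2 - L)" using expo unfolding A_def by simp
  also have "\<dots> = \<delta>" unfolding L_def using d by (simp add: exp_diff)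
  finally show ?thesis .
qed


theorem lemmaA1:
  fixes \<delta> p \<epsilon> :: real and n :: nat
  assumes "0 < \<delta>" "\<delta> \<le> 1" "0 \<le> p" "p \<le> 1" "n > 0"
    and "p \<ge> 16 * ln (2 / \<delta>) / real n"
    and "\<epsilon> = ln (1 + sqrt (64 * ln (4 / \<delta>)) / sqrt (p * real n) + 8 / (p * real n))"
  shows "measure_pmf.prob (P_pmf n p) (loss_bounded \<epsilon> (P_pmf n p) (Q_pmf n p)) \<ge> 1 - \<delta> \<and>
    measure_pmf.prob (Q_pmf n p) (loss_bounded \<epsilon> (P_pmf n p) (Q_pmf n p)) \<ge> 1 - \<delta> \<and>
    indist \<epsilon> \<delta> (P_pmf n p) (Q_pmf n p)"
proof -
  define s where "s = p * real n"
  define L where "L = ln (4 / \<delta>)"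
  define r where "r = sqrt L / sqrt s"
  define \<alpha> where "\<alpha> = 1 + 8 * r"
  define \<gamma> where "\<gamma> = (\<alpha>-1)/(2*(1+\<alpha>))"
  define \<rho> where "\<rho> = 1/(1+\<alpha>)"
  have p01: "p \<in> {0..1}" using assms by auto
  have T: "2*exp(4*\<gamma>*\<rho>) * (1 - p + p*exp(-(2*\<gamma>^2)))^(n-1) \<le> \<delta>"
    using tail_numeric[OF assms(1-6)] unfolding \<gamma>_def \<rho>_def \<alpha>_def r_def s_def L_def .
  have L0: "L \<ge> 0" unfolding L_def using assms by simp
  have s0: "s \<ge> 0" unfolding s_def using assms by simp
  have r0: "r \<ge> 0" unfolding r_def using L0 s0 by simp
  have a1: "\<alpha> \<ge> 1" unfolding \<alpha>_def using r0 by simp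
  have "measure_pmf.prob (AC_pmf n p) (- G \<alpha>) \<le> 2*exp(4*\<gamma>*\<rho>) * (1 - p + p*exp(-(2*\<gamma>^2)))^(n-1)"
    by (rule AC_bad[OF p01 a1 \<gamma>_def \<rho>_def])
  with T have bad: "measure_pmf.prob (AC_pmf n p) (- G \<alpha>) \<le> \<delta>" by linarith
  have good: "measure_pmf.prob (AC_pmf n p) (G \<alpha>) \<ge> 1 - \<delta>"
    using bad measure_pmf.prob_compl[of "G \<alpha>" "AC_pmf n p"] by (simp add: Compl_eq_Diff_UNIV)
  have sq: "sqrt (64 * ln (4 / \<delta>)) = 8 * sqrt L" unfolding L_def by (simp add: real_sqrt_mult)
  have arg: "1 + sqrt (64 * ln (4 / \<delta>)) / sqrt (p * real n) + 8 / (p * real n) = \<alpha> + 8 / s"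
    unfolding sq \<alpha>_def r_def s_def by simp
  have "8 / s \<ge> 0" using s0 by simp
  hence apos: "\<alpha> + 8 / s > 0" using a1 by linarith
  have ae: "\<alpha> \<le> exp \<epsilon>" unfolding assms(7) arg using apos \<open>8 / s \<ge> 0\<close> by simp
  have a0: "0 < \<alpha>" using a1 by simp
  have P1: "measure_pmf.prob (P_pmf n p) (loss_bounded \<epsilon> (P_pmf n p) (Q_pmf n p)) \<ge> 1 - \<delta>"
    using P_lower[OF a0 ae, of n p] good by linarith
  have Q1: "measure_pmf.prob (Q_pmf n p) (loss_bounded \<epsilon> (P_pmf n p) (Q_pmf n p)) \<ge> 1 - \<delta>"
    using Q_lower[OF a0 ae, of n p] good by linarith
  show ?thesis using P1 Q1 indist_from_loss[OF P1 Q1] by blast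
qed

end
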